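(* Let $n\ge 2$, let $\epsilon\in(0,1)$, let $Q^0$ be a probability distribution on $n$ categories with $Q^0_i>0$ for all $i$, and let $\widehat{P}$ be a fixed probability vector in $\mathbb{S}^n$ (not varying with $p$). Take $\mathcal{Q}=\{Q^0\}$, and for each $p$ let $\alpha_{\mathrm{L}}=\alpha_{\mathrm{L}}(p)$ be as defined below. Then, as $p\to\infty$, $$\kappa(\widehat{P}\,\|\,Q^0)-\alpha_{\mathrm{L}}=O\left(\sqrt{\frac{\log p}{p}}\right).$$
   Context: $\mathbb{S}^n=\{P\in\mathbb{R}^n:\sum_iP_i=1,\ P_i\ge0\}$. $D(P\|Q)=\sum_iP_i\log(P_i/Q_i)$. The separation distance is $\kappa(P\|Q)=\max_{i\in[n]}\left(1-\frac{P_i}{Q_i}\right)$. For $\alpha\in[0,1]$ let $\mathcal{P}(\widehat{P},\alpha)=\{P\in\mathbb{S}^n: P_i\le \widehat{P}_i/(1-\alpha),\ i=1,\dots,n\}$ (the set of distributions obtainable by discarding a fraction $\alpha$ of the mass of $\widehat{P}$), and let $D^*_\alpha=\min_{P\in\mathcal{P}(\widehat{P},\alpha),\,Q\in\mathcal{Q}}D(P\|Q)$, which for $\mathcal{Q}=\{Q^0\}$ is $\min_{P\in\mathcal{P}(\widehat{P},\alpha)}D(P\|Q^0)$. Define $$\alpha_{\mathrm{L}}=\max\left\{\alpha:\ D^*_\alpha\ \ge\ \frac{1}{p(1-\alpha)}\log\left(\frac1\epsilon\right)+\frac{2n}{p(1-\alpha)}\log\big(p(1-\alpha)+1\big)\right\}.$$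 *)

theory Defs
  imports Complex_Main "HOL-Library.Landau_Symbols" "HOL-Library.Cardinality"
begin

definition simplex :: "('n::finite \<Rightarrow> real) set" where
  "simplex = {P. (\<forall>i. 0 \<le> P i) \<and> (\<Sum>i\<in>UNIV. P i) = 1}"

text \<open>KL divergence (natural log; 0 * ln 0 = 0 holds automatically).\<close>
definition KL :: "('n::finite \<Rightarrow> real) \<Rightarrow> ('n \<Rightarrow> real) \<Rightarrow> real" where
  "KL P Q = (\<Sum>i\<in>UNIV. P i * ln (P i / Q i))"

definition sep_dist :: "('n::finite \<Rightarrow> real) \<Rightarrow> ('n \<Rightarrow> real) \<Rightarrow> real" where
  "sep_dist P Q = Max (range (\<lambda>i. 1 - P i / Q i))"

text \<open>Distributions obtainable by discarding a fraction alpha of the mass of Phat.\<close>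
definition trimmed :: "('n::finite \<Rightarrow> real) \<Rightarrow> real \<Rightarrow> ('n \<Rightarrow> real) set" where
  "trimmed Phat \<alpha> = {P \<in> simplex. \<forall>i. P i \<le> Phat i / (1 - \<alpha>)}"

definition Dstar :: "('n::finite \<Rightarrow> real) \<Rightarrow> ('n \<Rightarrow> real) \<Rightarrow> real \<Rightarrow> real" where
  "Dstar Phat Q0 \<alpha> = Inf ((\<lambda>P. KL P Q0) ` trimmed Phat \<alpha>)"

text \<open>alpha_L; alpha ranges over [0,1) (at alpha = 1 the threshold is +infinity);
  convention alpha_L = 0 if no alpha qualifies.\<close>
definition alpha_L :: "nat \<Rightarrow> real \<Rightarrow> real \<Rightarrow> ('n::finite \<Rightarrow> real) \<Rightarrow> ('n \<Rightarrow> real) \<Rightarrow> real" where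
  "alpha_L n \<epsilon> p Phat Q0 = Sup ({0} \<union> {\<alpha> \<in> {0..<1}.
      Dstar Phat Q0 \<alpha> \<ge> 1 / (p * (1 - \<alpha>)) * ln (1 / \<epsilon>)
        + 2 * real n / (p * (1 - \<alpha>)) * ln (p * (1 - \<alpha>) + 1)})"

end

theory Submission
  imports Defs
begin

lemma ln_lower:
  fixes r :: real
  assumes "0 < r" "r \<le> 1"
  shows "(r - 1/r)/2 \<le> ln r"
proof -
  let ?h = "\<lambda>x::real. ln x - (x - 1/x)/2"
  have "?h 1 \<le> ?h r"
  proof (rule DERIV_nonpos_imp_decreasing_open[OF assms(2)])
    fix x :: real assume x: "r < x" "x < 1"
    hence xp: "0 < x" using assms by simp
    have "DERIV ?h x :> (1/x - (1 + 1/x^2)/2)"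
      using xp by (auto intro!: derivative_eq_intros simp: field_simps power2_eq_square)
    moreover have "1/x - (1 + 1/x^2)/2 \<le> 0"
    proof -
      have "1/x - (1 + 1/x^2)/2 = - ((x-1)^2) / (2*x^2)" using xp
        by (simp add: field_simps power2_eq_square)
      also have "\<dots> \<le> 0" by simp
      finally show ?thesis .
    qed
    ultimately show "\<exists>y. DERIV ?h x :> y \<and> y \<le> 0" by blast
  next
    show "continuous_on {r..1} ?h" using assms
      by (auto intro!: continuous_intros)
  qed
  thus ?thesis by simp
qed

lemma f_quad:
  fixes r :: real
  assumes "0 \<le> r" "r \<le> 1"
  shows "(1-r)^2/2 \<le> r * ln r - r + 1"
proof (cases "r = 0")
  case True thus ?thesis by simp
next
  case False
  hence rp: "0 < r" using assms by simp
  have "r * ((r - 1/r)/2) \<le> r * ln r" using ln_lower[OF rp assms(2)] rp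
    by (intro mult_left_mono) auto
  moreover have "r * ((r - 1/r)/2) = (r^2 - 1)/2" using rp by (simp add: field_simps power2_eq_square)
  ultimately have "(r^2 - 1)/2 \<le> r * ln r" by simp
  moreover have "(1-r)^2/2 = (r^2-1)/2 + 1 - r" by (simp add: power2_eq_square field_simps)
  ultimately show ?thesis by linarith
qed

lemma f_nonneg:
  fixes r :: real
  assumes "0 \<le> r"
  shows "0 \<le> r * ln r - r + 1"
proof (cases "r = 0")
  case True thus ?thesis by simp
next
  case False
  hence rp: "0 < r" using assms by simp
  have "ln (1/r) \<le> 1/r - 1" using ln_le_minus_one rp by simp
  hence "- ln r \<le> 1/r - 1" using rp by (simp add: ln_div)
  hence "r * (- ln r) \<le> r * (1/r - 1)" using rp by (intro mult_left_mono) auto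
  moreover have "r*(1/r-1) = 1 - r" using rp by (simp add: field_simps)
  ultimately show ?thesis by linarith
qed

lemma KL_decomp:
  assumes "P \<in> simplex" "Q \<in> simplex" "\<forall>i. Q i > 0"
  shows "KL P Q = (\<Sum>i\<in>UNIV. Q i * (P i/Q i * ln (P i/Q i) - P i/Q i + 1))"
proof -
  have "(\<Sum>i\<in>UNIV. Q i * (P i/Q i * ln (P i/Q i) - P i/Q i + 1))
      = (\<Sum>i\<in>UNIV. P i * ln (P i/Q i) - P i + Q i)"
  proof (intro sum.cong refl)
    fix i have "Q i \<noteq> 0" using assms(3) by (metis less_irrefl)
    thus "Q i * (P i/Q i * ln (P i/Q i) - P i/Q i + 1) = P i * ln (P i/Q i) - P i + Q i"
      by (simp add: field_simps)
  qed
  also have "\<dots> = KL P Q - (\<Sum>i\<in>UNIV. P i) + (\<Sum>i\<in>UNIV. Q i)"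
    by (simp add: sum.distrib sum_subtractf KL_def)
  finally show ?thesis using assms(1,2) by (simp add: simplex_def)
qed

lemma KL_ge_single:
  assumes "P \<in> simplex" "Q \<in> simplex" "\<forall>i. Q i > 0"
  shows "KL P Q \<ge> Q j * (P j/Q j * ln (P j/Q j) - P j/Q j + 1)"
proof -
  have nn: "\<And>i. 0 \<le> Q i * (P i/Q i * ln (P i/Q i) - P i/Q i + 1)"
    using assms by (intro mult_nonneg_nonneg f_nonneg) (auto simp: simplex_def less_imp_le)
  have "Q j * (P j/Q j * ln (P j/Q j) - P j/Q j + 1)
     \<le> (\<Sum>i\<in>UNIV. Q i * (P i/Q i * ln (P i/Q i) - P i/Q i + 1))"
    by (rule member_le_sum) (use nn in auto)
  thus ?thesis using KL_decomp[OF assms] by simp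
qed

lemma KL_nonneg:
  assumes "P \<in> simplex" "Q \<in> simplex" "\<forall>i. Q i > 0"
  shows "KL P Q \<ge> 0"
  using KL_ge_single[OF assms, of undefined] assms f_nonneg[of "P undefined / Q undefined"]
  by (smt (verit) divide_nonneg_pos mult_nonneg_nonneg simplex_def mem_Collect_eq)

lemma KL_self: "(\<forall>i. Q i > 0) \<Longrightarrow> KL Q Q = 0"
proof -
  assume "\<forall>i. Q i > 0"
  hence "\<And>i. Q i \<noteq> 0" by (metis less_irrefl)
  thus ?thesis by (simp add: KL_def)
qed

theorem theorem2:
  fixes Q0 Phat :: "'n::finite \<Rightarrow> real" and \<epsilon> :: real
  assumes "CARD('n) \<ge> 2"
    and "0 < \<epsilon>" and "\<epsilon> < 1"
    and "Q0 \<in> simplex" and "\<forall>i. Q0 i > 0"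
    and "Phat \<in> simplex"
  shows "(\<lambda>p. sep_dist Phat Q0 - alpha_L CARD('n) \<epsilon> p Phat Q0)
           \<in> O[at_top](\<lambda>p. sqrt (ln p / p))"
proof -
  note Q0 = assms(4) and Qpos = assms(5) and Ph = assms(6)
  define \<kappa> where "\<kappa> = sep_dist Phat Q0"
  define n where "n = CARD('n)"
  define L where "L = ln (1/\<epsilon>)"
  define A where "A = (\<lambda>p::real. {\<alpha> \<in> {0..<1}.
      Dstar Phat Q0 \<alpha> \<ge> 1 / (p * (1 - \<alpha>)) * ln (1 / \<epsilon>)
        + 2 * real n / (p * (1 - \<alpha>)) * ln (p * (1 - \<alpha>) + 1)})"
  have aL: "alpha_L CARD('n) \<epsilon> p Phat Q0 = Sup ({0} \<union> A p)" for p
    unfolding alpha_L_def A_def n_def by simp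
  have Phnn: "\<And>i. 0 \<le> Phat i" using Ph by (simp add: simplex_def)
  have Q0nn: "\<And>i. 0 \<le> Q0 i" using Qpos by (simp add: less_imp_le)
  have fin: "finite (range (\<lambda>i. 1 - Phat i / Q0 i))" by simp
  have ne: "range (\<lambda>i. 1 - Phat i / Q0 i) \<noteq> {}" by simp
  obtain i0 where i0: "\<kappa> = 1 - Phat i0 / Q0 i0"
  proof -
    have "Max (range (\<lambda>i. 1 - Phat i / Q0 i)) \<in> range (\<lambda>i. 1 - Phat i / Q0 i)"
      using Max_in[OF fin ne] .
    then obtain j where "Max (range (\<lambda>i. 1 - Phat i / Q0 i)) = 1 - Phat j / Q0 j" by blast
    thus ?thesis using that unfolding \<kappa>_def sep_dist_def by blast
  qed
  have kmax: "\<And>i. 1 - Phat i / Q0 i \<le> \<kappa>"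
    unfolding \<kappa>_def sep_dist_def using Max_ge[OF fin] by simp
  define q where "q = Q0 i0"
  have qpos: "q > 0" using Qpos q_def by simp
  have k1: "\<kappa> \<le> 1" using i0 Phnn[of i0] Q0nn[of i0] by (simp add: divide_nonneg_nonneg)
  have k0: "\<kappa> \<ge> 0"
  proof (rule ccontr)
    assume "\<not> \<kappa> \<ge> 0"
    hence "\<And>i. Q0 i < Phat i" using kmax Qpos
      by (smt (verit, best) less_divide_eq_1_pos)
    hence "(\<Sum>i\<in>UNIV. Q0 i) < (\<Sum>i\<in>UNIV. Phat i)"
      by (intro sum_strict_mono) auto
    thus False using Q0 Ph by (simp add: simplex_def)
  qed
  have Phtrim: "Phat \<in> trimmed Phat \<alpha>" if "0 \<le> \<alpha>" "\<alpha> < 1" for \<alpha>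
  proof -
    have "Phat i \<le> Phat i / (1 - \<alpha>)" for i
      using that Phnn[of i] by (simp add: le_divide_eq mult_left_le)
    thus ?thesis using Ph by (simp add: trimmed_def)
  qed
  have bddb: "bdd_below ((\<lambda>P. KL P Q0) ` trimmed Phat \<alpha>)" for \<alpha>
    by (rule bdd_belowI[of _ 0]) (use KL_nonneg Q0 Qpos in \<open>auto simp: trimmed_def\<close>)
  have bdda: "bdd_above ({0} \<union> A p)" for p
    by (rule bdd_aboveI[of _ 1]) (auto simp: A_def)
  have upper: "alpha_L CARD('n) \<epsilon> p Phat Q0 \<le> \<kappa>" if p: "p > 0" for p
    unfolding aL
  proof (rule cSup_least)
    show "{0} \<union> A p \<noteq> {}" by simp
    fix \<alpha> assume "\<alpha> \<in> {0} \<union> A p"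
    then consider "\<alpha> = 0" | "\<alpha> \<in> A p" by blast
    thus "\<alpha> \<le> \<kappa>"
    proof cases
      case 1 thus ?thesis using k0 by simp
    next
      case 2
      hence a: "0 \<le> \<alpha>" "\<alpha> < 1" and
        D: "Dstar Phat Q0 \<alpha> \<ge> 1 / (p * (1 - \<alpha>)) * ln (1 / \<epsilon>)
        + 2 * real n / (p * (1 - \<alpha>)) * ln (p * (1 - \<alpha>) + 1)"
        by (auto simp: A_def)
      show ?thesis
      proof (rule ccontr)
        assume "\<not> \<alpha> \<le> \<kappa>"
        hence ak: "\<kappa> \<le> \<alpha>" by simp
        have "Q0 \<in> trimmed Phat \<alpha>"
        proof -
          have "Q0 i \<le> Phat i / (1 - \<alpha>)" for i
          proof -
            have "1 - \<alpha> \<le> Phat i / Q0 i" using kmax[of i] ak by simp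
            hence "(1 - \<alpha>) * Q0 i \<le> Phat i" using Qpos[rule_format, of i]
              by (simp add: le_divide_eq)
            thus ?thesis using a by (simp add: le_divide_eq mult.commute)
          qed
          thus ?thesis using Q0 by (simp add: trimmed_def)
        qed
        hence "Dstar Phat Q0 \<alpha> \<le> 0" unfolding Dstar_def
          using cInf_lower[OF _ bddb] KL_self[OF Qpos] by (metis image_eqI)
        moreover have "0 < 1 / (p * (1 - \<alpha>)) * ln (1 / \<epsilon>)"
          using p a assms(2,3) by simp
        moreover have "0 \<le> 2 * real n / (p * (1 - \<alpha>)) * ln (p * (1 - \<alpha>) + 1)"
          using p a by simp
        ultimately show False using D by linarith
      qed
    qed
  qed
  define C where "C = sqrt (2*(1+4*real n)/q)"
  have C2: "C^2 = 2*(1+4*real n)/q" unfolding C_def using qpos by simp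
  have Cpos: "C > 0" unfolding C_def using qpos by simp
  have aL0: "alpha_L CARD('n) \<epsilon> p Phat Q0 \<ge> 0" for p
    unfolding aL by (rule cSup_upper[OF _ bdda]) simp
  have lower: "\<kappa> - alpha_L CARD('n) \<epsilon> p Phat Q0 \<le> C * sqrt (ln p / p)"
    if p: "p \<ge> max 2 (1/\<epsilon>)" for p
  proof -
    have p2: "p \<ge> 2" and pe: "p \<ge> 1/\<epsilon>" using p by auto
    have lnp: "ln p > 0" using p2 by simp
    have Lle: "L \<le> ln p" unfolding L_def using pe p2 assms(2) by (subst ln_le_cancel_iff) auto
    have lnp1: "ln (p+1) \<le> 2 * ln p"
    proof -
      have "2 * p \<le> p * p" using p2 by (intro mult_right_mono) auto
      hence "p + 1 \<le> p^2" using p2 unfolding power2_eq_square by linarith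
      hence "ln (p+1) \<le> ln (p^2)" using p2 by simp
      thus ?thesis using p2 by (simp add: ln_realpow)
    qed
    define \<delta> where "\<delta> = C * sqrt (ln p / p)"
    have dpos: "\<delta> > 0" unfolding \<delta>_def using Cpos lnp p2 by simp
    have d2: "\<delta>^2 = C^2 * (ln p / p)" unfolding \<delta>_def using lnp p2
      by (simp add: power_mult_distrib)
    show ?thesis
    proof (cases "\<kappa> - \<delta> < 0")
      case True thus ?thesis using aL0[of p] unfolding \<delta>_def by linarith
    next
      case False
      define \<alpha> where "\<alpha> = \<kappa> - \<delta>"
      define s where "s = 1 - \<alpha>"
      have a0: "0 \<le> \<alpha>" and a1: "\<alpha> < 1" using False k1 dpos unfolding \<alpha>_def by auto
      have s0: "0 < s" and s1: "s \<le> 1" using a0 a1 unfolding s_def by auto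
      have ds: "\<delta> \<le> s" unfolding s_def \<alpha>_def using k1 by simp
      define B where "B = (1+4*real n) * ln p / (p * s)"
      have DB: "B \<le> Dstar Phat Q0 \<alpha>" unfolding Dstar_def
      proof (rule cInf_greatest)
        show "(\<lambda>P. KL P Q0) ` trimmed Phat \<alpha> \<noteq> {}" using Phtrim[OF a0 a1] by blast
        fix x assume "x \<in> (\<lambda>P. KL P Q0) ` trimmed Phat \<alpha>"
        then obtain P where P: "P \<in> trimmed Phat \<alpha>" and x: "x = KL P Q0" by blast
        have Ps: "P \<in> simplex" using P by (simp add: trimmed_def)
        have Pi0: "P i0 \<le> Phat i0 / s" using P unfolding trimmed_def s_def by simp
        define r where "r = P i0 / q"
        have r0: "0 \<le> r" unfolding r_def using Ps qpos by (simp add: simplex_def)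
        have Phi0: "Phat i0 = q * (1 - \<kappa>)" using i0 qpos unfolding q_def by simp
        have "r \<le> (1 - \<kappa>) / s" unfolding r_def using Pi0 Phi0 qpos s0
          by (simp add: divide_le_eq mult.commute mult.left_commute)
        also have "(1 - \<kappa>)/s = 1 - \<delta>/s" using s0 unfolding s_def \<alpha>_def
          by (simp add: field_simps)
        finally have r1: "\<delta>/s \<le> 1 - r" by simp
        have r1': "r \<le> 1" using r1 dpos s0 by (smt (verit) divide_pos_pos)
        have "q * (r * ln r - r + 1) \<le> KL P Q0"
          using KL_ge_single[OF Ps Q0 Qpos, of i0] unfolding r_def q_def by simp
        moreover have "q * ((1-r)^2/2) \<le> q * (r * ln r - r + 1)"
          using f_quad[OF r0 r1'] qpos by simp
        moreover have "(\<delta>/s)^2 \<le> (1-r)^2"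
          using r1 dpos s0 by (intro power_mono) auto
        moreover have "\<delta>^2/s \<le> (\<delta>/s)^2"
        proof -
          have "\<delta>^2/s \<le> \<delta>^2/s^2"
            using s0 s1 by (intro divide_left_mono) (auto simp: power2_eq_square mult_le_cancel_left1)
          thus ?thesis by (simp add: power_divide)
        qed
        moreover have "q * ((\<delta>^2/s)/2) = B"
          unfolding B_def d2 C2 using qpos s0 p2 by (simp add: field_simps)
        ultimately show "B \<le> x" unfolding x
          by (smt (verit) mult_left_mono qpos divide_right_mono)
      qed
      have "1 / (p * s) * ln (1 / \<epsilon>) + 2 * real n / (p * s) * ln (p * s + 1) \<le> B"
      proof -
        have ps: "0 < p * s" using s0 p2 by simp
        have "ln (p * s + 1) \<le> ln (p+1)" using ps s1 p2
          by (simp add: mult_left_le)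
        hence "ln (p * s + 1) \<le> 2 * ln p" using lnp1 by linarith
        hence t2: "2 * real n / (p * s) * ln (p * s + 1) \<le> 2 * real n / (p * s) * (2 * ln p)"
          using ps by (intro mult_left_mono) auto
        have t1: "1 / (p * s) * ln (1 / \<epsilon>) \<le> 1 / (p * s) * ln p"
          using Lle ps unfolding L_def by (intro mult_left_mono) auto
        have "1 / (p * s) * ln p + 2 * real n / (p * s) * (2 * ln p) = B"
          unfolding B_def using ps by (simp add: field_simps add_divide_distrib)
        thus ?thesis using t1 t2 by linarith
      qed
      hence "\<alpha> \<in> A p" using DB a0 a1 unfolding A_def s_def by auto
      hence "\<alpha> \<le> alpha_L CARD('n) \<epsilon> p Phat Q0"
        unfolding aL by (intro cSup_upper[OF _ bdda]) auto
      thus ?thesis unfolding \<alpha>_def \<delta>_def by linarith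
    qed
  qed
  show ?thesis
  proof (rule bigoI[where c = C])
    show "\<forall>\<^sub>F p in at_top. norm (sep_dist Phat Q0 - alpha_L CARD('n) \<epsilon> p Phat Q0)
        \<le> C * norm (sqrt (ln p / p))"
      using eventually_ge_at_top[of "max 2 (1/\<epsilon>)"]
    proof eventually_elim
      case (elim p)
      hence p2: "p \<ge> 2" by simp
      have "0 \<le> \<kappa> - alpha_L CARD('n) \<epsilon> p Phat Q0" using upper[of p] p2 by simp
      moreover have "0 \<le> sqrt (ln p / p)" using p2 by simp
      ultimately show ?case using lower[OF elim] unfolding \<kappa>_def by simp
    qed
  qed
qed

end
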